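(* Let $\mathcal N_1$ be the network with nodes $\sigma_1,\sigma_2,v,\rho$, source set $S=\{\sigma_1,\sigma_2\}$, sink $\rho$, and five edges: two parallel edges from $\sigma_1$ to $v$, one edge from $\sigma_2$ to $v$, one edge from $\sigma_2$ to $\rho$, and one edge from $v$ to $\rho$. Let $f(m_1,m_2)=m_1+m_2$ over $\mathbb F_2$. Then $\widehat{\mathcal C}(\mathcal N_1,f,1)=1=\min_{i}\mathrm{mincut}(\sigma_i,\rho)$; in particular there is an admissible $(1,1)$ secure network code for $(\mathcal N_1,f,1)$.
   Context: $\mathrm{mincut}(u,v)$ is the minimum size of an edge set whose deletion leaves no path from node $u$ to node $v$. For a nonnegative integer $r$, $\mathcal W_r=\{W\subseteq\mathcal E:|W|\le r\}$. Secure model for a network $\mathcal N=(\mathcal G,S,\rho)$ ($\mathcal G=(\mathcal V,\mathcal E)$ directed acyclic, sources without input edges, sink without output edges), $q$ a prime power, $f=\sum_i m_i$ over $\mathbb F_q$, each edge carrying one symbol of $\mathbb F_q$ per use: an $(\ell,n)$ secure network code has source messages $\mathbf M_i\in\mathbb F_q^\ell$ (i.i.d. uniform entries) and keys $\mathbf K_i$ uniform on finite sets $\mathcal K_i$, all mutually independent; each edge out of $\sigma_i$ carries a function of $(\mathbf M_i,\mathbf K_i)$ in $\mathbb F_q^n$, every other edge carries a function in $\mathbb F_q^n$ of the messages on the input edges of its tail; a decoder at $\rho$ maps the incoming messages to $\mathbb F_q^\ell$. Admissible (for security level $r$): decoder outputs $\sum_i\mathbf m_i$ for all messages and keys, and $I(\mathbf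 Y_W;\mathbf M_S)=0$ for all $W\in\mathcal W_r$ ($\mathbf Y_W$ the messages on edges of $W$, $\mathbf M_S=(\mathbf M_1,\dots,\mathbf M_s)$). Rate $\ell/n$; $R$ achievable if for all $\epsilon>0$ some admissible code has rate $>R-\epsilon$; $\widehat{\mathcal C}(\mathcal N,f,r)$ is the maximum achievable rate. *)

theory Defs
  imports Complex_Main "HOL-Library.Z2"
begin

datatype node = Sigma1 | Sigma2 | V | Rho
datatype edge = E1 | E2 | E3 | E4 | E5

fun tl_e :: "edge \<Rightarrow> node" where
  "tl_e E1 = Sigma1" | "tl_e E2 = Sigma1" | "tl_e E3 = Sigma2"
| "tl_e E4 = Sigma2" | "tl_e E5 = V"

fun hd_e :: "edge \<Rightarrow> node" where
  "hd_e E1 = V" | "hd_e E2 = V" | "hd_e E3 = V"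
| "hd_e E4 = Rho" | "hd_e E5 = Rho"

definition step_without :: "edge set \<Rightarrow> (node \<times> node) set" where
  "step_without C = {(tl_e e, hd_e e) | e. e \<notin> C}"

definition mincut :: "node \<Rightarrow> node \<Rightarrow> nat" where
  "mincut u w = (LEAST k. \<exists>C :: edge set. card C = k \<and> (u, w) \<notin> (step_without C)\<^sup>*)"

text \<open>F_2^l is represented by functions nat => bit vanishing outside {0..<l}.\<close>
definition vecs :: "nat \<Rightarrow> (nat \<Rightarrow> bit) set" where
  "vecs l = {x. \<forall>i\<ge>l. x i = 0}"

text \<open>A code: block lengths l (message length) and n (symbols per edge), key sets K1, K2
(finite, nonempty, keys drawn uniformly; wlog subsets of nat), local encoders
enc1, enc2 (edges out of sigma1, functions of (M1,K1)), enc3, enc4 (edges out of sigma2,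
functions of (M2,K2)), enc5 (edge out of v, function of the messages on E1,E2,E3),
and the decoder dec at rho (function of the messages on E4,E5).\<close>

record code =
  len_l :: nat
  len_n :: nat
  keys1 :: "nat set"
  keys2 :: "nat set"
  enc1 :: "(nat \<Rightarrow> bit) \<Rightarrow> nat \<Rightarrow> (nat \<Rightarrow> bit)"
  enc2 :: "(nat \<Rightarrow> bit) \<Rightarrow> nat \<Rightarrow> (nat \<Rightarrow> bit)"
  enc3 :: "(nat \<Rightarrow> bit) \<Rightarrow> nat \<Rightarrow> (nat \<Rightarrow> bit)"
  enc4 :: "(nat \<Rightarrow> bit) \<Rightarrow> nat \<Rightarrow> (nat \<Rightarrow> bit)"
  enc5 :: "(nat \<Rightarrow> bit) \<Rightarrow> (nat \<Rightarrow> bit) \<Rightarrow> (nat \<Rightarrow> bit) \<Rightarrow> (nat \<Rightarrow> bit)"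
  dec :: "(nat \<Rightarrow> bit) \<Rightarrow> (nat \<Rightarrow> bit) \<Rightarrow> (nat \<Rightarrow> bit)"

definition omega :: "code \<Rightarrow> ((nat \<Rightarrow> bit) \<times> (nat \<Rightarrow> bit) \<times> nat \<times> nat) set" where
  "omega c = vecs (len_l c) \<times> vecs (len_l c) \<times> keys1 c \<times> keys2 c"

fun edge_msg :: "code \<Rightarrow> (nat \<Rightarrow> bit) \<times> (nat \<Rightarrow> bit) \<times> nat \<times> nat \<Rightarrow> edge \<Rightarrow> (nat \<Rightarrow> bit)" where
  "edge_msg c (m1, m2, k1, k2) E1 = enc1 c m1 k1"
| "edge_msg c (m1, m2, k1, k2) E2 = enc2 c m1 k1"
| "edge_msg c (m1, m2, k1, k2) E3 = enc3 c m2 k2"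
| "edge_msg c (m1, m2, k1, k2) E4 = enc4 c m2 k2"
| "edge_msg c (m1, m2, k1, k2) E5 =
     enc5 c (enc1 c m1 k1) (enc2 c m1 k1) (enc3 c m2 k2)"

definition Y_W :: "code \<Rightarrow> edge set \<Rightarrow> (nat \<Rightarrow> bit) \<times> (nat \<Rightarrow> bit) \<times> nat \<times> nat \<Rightarrow> (edge \<Rightarrow> (nat \<Rightarrow> bit))" where
  "Y_W c W \<omega> = (\<lambda>e. if e \<in> W then edge_msg c \<omega> e else (\<lambda>_. 0))"

definition M_S :: "(nat \<Rightarrow> bit) \<times> (nat \<Rightarrow> bit) \<times> nat \<times> nat \<Rightarrow> (nat \<Rightarrow> bit) \<times> (nat \<Rightarrow> bit)" where
  "M_S \<omega> = (fst \<omega>, fst (snd \<omega>))"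

definition prob_c :: "code \<Rightarrow> (((nat \<Rightarrow> bit) \<times> (nat \<Rightarrow> bit) \<times> nat \<times> nat) \<Rightarrow> bool) \<Rightarrow> real" where
  "prob_c c P = real (card {\<omega> \<in> omega c. P \<omega>}) / real (card (omega c))"

text \<open>I(Y_W; M_S) = 0, i.e. Y_W and M_S are independent random variables.\<close>
definition zero_leakage :: "code \<Rightarrow> edge set \<Rightarrow> bool" where
  "zero_leakage c W \<longleftrightarrow>
     (\<forall>y m. prob_c c (\<lambda>\<omega>. Y_W c W \<omega> = y \<and> M_S \<omega> = m)
            = prob_c c (\<lambda>\<omega>. Y_W c W \<omega> = y) * prob_c c (\<lambda>\<omega>. M_S \<omega> = m))"

definition well_formed_code :: "code \<Rightarrow> bool" where
  "well_formed_code c \<longleftrightarrow>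
     len_n c \<ge> 1 \<and>
     finite (keys1 c) \<and> keys1 c \<noteq> {} \<and> finite (keys2 c) \<and> keys2 c \<noteq> {} \<and>
     (\<forall>m \<in> vecs (len_l c). \<forall>k \<in> keys1 c.
        enc1 c m k \<in> vecs (len_n c) \<and> enc2 c m k \<in> vecs (len_n c)) \<and>
     (\<forall>m \<in> vecs (len_l c). \<forall>k \<in> keys2 c.
        enc3 c m k \<in> vecs (len_n c) \<and> enc4 c m k \<in> vecs (len_n c)) \<and>
     (\<forall>y1 \<in> vecs (len_n c). \<forall>y2 \<in> vecs (len_n c). \<forall>y3 \<in> vecs (len_n c).
        enc5 c y1 y2 y3 \<in> vecs (len_n c)) \<and>
     (\<forall>y4 \<in> vecs (len_n c). \<forall>y5 \<in> vecs (len_n c). dec c y4 y5 \<in> vecs (len_l c))"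

definition admissible :: "nat \<Rightarrow> code \<Rightarrow> bool" where
  "admissible r c \<longleftrightarrow>
     well_formed_code c \<and>
     (\<forall>\<omega> \<in> omega c. dec c (edge_msg c \<omega> E4) (edge_msg c \<omega> E5) = (\<lambda>i. fst \<omega> i + fst (snd \<omega>) i)) \<and>
     (\<forall>W :: edge set. card W \<le> r \<longrightarrow> zero_leakage c W)"

definition rate :: "code \<Rightarrow> real" where
  "rate c = real (len_l c) / real (len_n c)"

definition achievable :: "nat \<Rightarrow> real \<Rightarrow> bool" where
  "achievable r R \<longleftrightarrow> (\<forall>\<epsilon>>0. \<exists>c. admissible r c \<and> rate c > R - \<epsilon>)"

definition secure_capacity :: "nat \<Rightarrow> real" where
  "secure_capacity r = Sup {R. achievable r R}"

end

theory Submission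
  imports Defs
begin
lemma cnt:
  assumes "finite A" "finite B" "finite K1" "finite K2"
  shows "card {\<omega> \<in> A \<times> B \<times> K1 \<times> K2. Q (fst \<omega>, fst (snd \<omega>)) (snd (snd \<omega>))}
         = (\<Sum>a\<in>A \<times> B. card {k \<in> K1 \<times> K2. Q a k})"
proof -
  define f where "f = (\<lambda>(a::'a\<times>'b, k::'c\<times>'d). (fst a, snd a, fst k, snd k))"
  define S where "S = (SIGMA a: A \<times> B. {k \<in> K1 \<times> K2. Q a k})"
  have 1: "{\<omega> \<in> A \<times> B \<times> K1 \<times> K2. Q (fst \<omega>, fst (snd \<omega>)) (snd (snd \<omega>))} = f ` S"
    unfolding f_def S_def
    apply (rule set_eqI)
    subgoal for w by (cases w) (simp add: image_iff)
    done
  have 2: "inj_on f S"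
    unfolding f_def by (rule inj_onI) (clarsimp simp: prod_eq_iff)
  have 3: "card S = (\<Sum>a\<in>A \<times> B. card {k \<in> K1 \<times> K2. Q a k})"
    unfolding S_def by (rule card_SigmaI) (use assms in auto)
  show ?thesis unfolding 1 card_image[OF 2] 3 ..
qed
lemma indep_count:
  fixes Y :: "'a \<times> 'b \<times> 'c \<times> 'd \<Rightarrow> 'y"
  assumes fin: "finite A" "finite B" "finite K1" "finite K2"
    and sh: "\<And>a1 a2. a1 \<in> A \<Longrightarrow> a2 \<in> B \<Longrightarrow> \<exists>\<phi>. bij_betw \<phi> (K1 \<times> K2) (K1 \<times> K2) \<and>
              (\<forall>k\<in>K1 \<times> K2. Y (a1, a2, fst k, snd k) = Y (p, q, fst (\<phi> k), snd (\<phi> k)))"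
  shows "real (card {\<omega> \<in> A \<times> B \<times> K1 \<times> K2. Y \<omega> = y \<and> (fst \<omega>, fst (snd \<omega>)) = m})
           * real (card (A \<times> B \<times> K1 \<times> K2))
         = real (card {\<omega> \<in> A \<times> B \<times> K1 \<times> K2. Y \<omega> = y})
           * real (card {\<omega> \<in> A \<times> B \<times> K1 \<times> K2. (fst \<omega>, fst (snd \<omega>)) = m})"
proof -
  define Y' where "Y' a k = Y (fst a, snd a, fst k, snd k)" for a :: "'a \<times> 'b" and k :: "'c \<times> 'd"
  define N where "N = card {k \<in> K1 \<times> K2. Y' (p, q) k = y}"
  have cN: "card {k \<in> K1 \<times> K2. Y' a k = y} = N" if aAB: "a \<in> A \<times> B" for a
  proof -
    have "fst a \<in> A" "snd a \<in> B" using aAB by auto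
    from sh[OF this] obtain \<phi> where bij: "bij_betw \<phi> (K1 \<times> K2) (K1 \<times> K2)"
      and eq: "\<forall>k\<in>K1 \<times> K2. Y (fst a, snd a, fst k, snd k) = Y (p, q, fst (\<phi> k), snd (\<phi> k))"
      by blast
    have im: "\<phi> ` (K1 \<times> K2) = K1 \<times> K2" and inj: "inj_on \<phi> (K1 \<times> K2)"
      using bij unfolding bij_betw_def by auto
    have s1: "{k \<in> K1 \<times> K2. Y' a k = y} = {k \<in> K1 \<times> K2. Y' (p, q) (\<phi> k) = y}"
    proof (rule Collect_cong)
      fix k
      show "(k \<in> K1 \<times> K2 \<and> Y' a k = y) = (k \<in> K1 \<times> K2 \<and> Y' (p, q) (\<phi> k) = y)"
      proof (cases "k \<in> K1 \<times> K2")
        case True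
        have "Y' a k = Y' (p, q) (\<phi> k)" unfolding Y'_def fst_conv snd_conv by (rule eq[rule_format, OF True])
        then show ?thesis by simp
      qed simp
    qed
    have s2: "\<phi> ` {k \<in> K1 \<times> K2. Y' (p, q) (\<phi> k) = y} = {k \<in> K1 \<times> K2. Y' (p, q) k = y}"
    proof (intro equalityI subsetI)
      fix x assume "x \<in> \<phi> ` {k \<in> K1 \<times> K2. Y' (p, q) (\<phi> k) = y}"
      then obtain k where "k \<in> K1 \<times> K2" "Y' (p, q) (\<phi> k) = y" "x = \<phi> k" by auto
      moreover have "\<phi> k \<in> K1 \<times> K2" using im \<open>k \<in> K1 \<times> K2\<close> by (metis imageI)
      ultimately show "x \<in> {k \<in> K1 \<times> K2. Y' (p, q) k = y}" by simp
    next
      fix x assume x: "x \<in> {k \<in> K1 \<times> K2. Y' (p, q) k = y}"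
      then have "x \<in> \<phi> ` (K1 \<times> K2)" using im by simp
      then obtain k where "k \<in> K1 \<times> K2" "x = \<phi> k" by (rule imageE)
      with x show "x \<in> \<phi> ` {k \<in> K1 \<times> K2. Y' (p, q) (\<phi> k) = y}" by auto
    qed
    have s3: "inj_on \<phi> {k \<in> K1 \<times> K2. Y' (p, q) (\<phi> k) = y}"
      by (rule inj_on_subset[OF inj]) auto
    show ?thesis unfolding N_def s1 using card_image[OF s3] s2 by simp
  qed
  have e1: "card {\<omega> \<in> A \<times> B \<times> K1 \<times> K2. Y \<omega> = y \<and> (fst \<omega>, fst (snd \<omega>)) = m}
      = (\<Sum>a\<in>A \<times> B. card {k \<in> K1 \<times> K2. Y' a k = y \<and> a = m})"
    using cnt[OF fin, of "\<lambda>a k. Y' a k = y \<and> a = m"] unfolding Y'_def by simp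
  also have "\<dots> = (\<Sum>a\<in>A \<times> B. if a = m then N else 0)"
    by (rule sum.cong) (auto simp: cN)
  also have "\<dots> = (if m \<in> A \<times> B then N else 0)"
    using fin by (simp add: sum.delta')
  finally have E1: "card {\<omega> \<in> A \<times> B \<times> K1 \<times> K2. Y \<omega> = y \<and> (fst \<omega>, fst (snd \<omega>)) = m}
      = (if m \<in> A \<times> B then N else 0)" .
  have "card {\<omega> \<in> A \<times> B \<times> K1 \<times> K2. Y \<omega> = y}
      = (\<Sum>a\<in>A \<times> B. card {k \<in> K1 \<times> K2. Y' a k = y})"
    using cnt[OF fin, of "\<lambda>a k. Y' a k = y"] unfolding Y'_def by simp
  also have "\<dots> = (\<Sum>a\<in>A \<times> B. N)"
    by (rule sum.cong) (auto simp: cN)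
  finally have E2: "card {\<omega> \<in> A \<times> B \<times> K1 \<times> K2. Y \<omega> = y} = card (A \<times> B) * N" by simp
  have "card {\<omega> \<in> A \<times> B \<times> K1 \<times> K2. (fst \<omega>, fst (snd \<omega>)) = m}
      = (\<Sum>a\<in>A \<times> B. card {k \<in> K1 \<times> K2. a = m})"
    using cnt[OF fin, of "\<lambda>a k. a = m"] by simp
  also have "\<dots> = (\<Sum>a\<in>A \<times> B. if a = m then card (K1 \<times> K2) else 0)"
    by (rule sum.cong) auto
  also have "\<dots> = (if m \<in> A \<times> B then card (K1 \<times> K2) else 0)"
    using fin by (simp add: sum.delta')
  finally have E3: "card {\<omega> \<in> A \<times> B \<times> K1 \<times> K2. (fst \<omega>, fst (snd \<omega>)) = m}
      = (if m \<in> A \<times> B then card (K1 \<times> K2) else 0)" .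
  have E4: "card (A \<times> B \<times> K1 \<times> K2) = card (A \<times> B) * card (K1 \<times> K2)"
    by (simp add: card_cartesian_product)
  show ?thesis unfolding E1 E2 E3 E4 by simp
qed

lemma UNIV_bit: "(UNIV :: bit set) = {0, 1}"
proof -
  have "x \<in> {0, 1}" for x :: bit by (cases x) auto
  then show ?thesis by auto
qed

lemma UNIV_edge: "(UNIV :: edge set) = {E1, E2, E3, E4, E5}"
proof -
  have "x \<in> {E1, E2, E3, E4, E5}" for x :: edge by (cases x) auto
  then show ?thesis by auto
qed

lemma finite_edge_set: "finite (W :: edge set)"
proof -
  have "finite (UNIV :: edge set)" by (simp add: UNIV_edge)
  then show ?thesis by (rule finite_subset[OF subset_UNIV])
qed

definition kb :: "nat \<Rightarrow> bit" where "kb k = (if k = 0 then 0 else 1)"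
definition sv :: "bit \<Rightarrow> nat \<Rightarrow> bit" where "sv b = (\<lambda>i. if i = 0 then b else 0)"
definition tog :: "bit \<Rightarrow> nat \<Rightarrow> nat" where "tog b k = (if b = 0 then k else if k = 0 then 1 else 0)"

definition c0 :: code where
  "c0 = \<lparr>len_l = 1, len_n = 1, keys1 = {0, 1}, keys2 = {0, 1},
         enc1 = (\<lambda>m k. sv (kb k)), enc2 = (\<lambda>m k. sv (m 0 + kb k)),
         enc3 = (\<lambda>m k. sv (kb k)), enc4 = (\<lambda>m k. sv (m 0 + kb k)),
         enc5 = (\<lambda>y1 y2 y3. sv (y1 0 + y2 0 + y3 0)),
         dec = (\<lambda>y4 y5. sv (y4 0 + y5 0))\<rparr>"

lemma sv_vecs: "sv b \<in> vecs 1"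
  by (simp add: sv_def vecs_def)

lemma vecs1: "vecs 1 = range sv"
proof
  show "vecs 1 \<subseteq> range sv"
  proof
    fix x assume "x \<in> vecs 1"
    then have "x = sv (x 0)" by (auto simp: vecs_def sv_def fun_eq_iff)
    then show "x \<in> range sv" by blast
  qed
  show "range sv \<subseteq> vecs 1" using sv_vecs by blast
qed

lemma finite_vecs1: "finite (vecs 1)"
  unfolding vecs1 by (rule finite_imageI) (simp add: UNIV_bit)

lemma kb_tog: "kb (tog b k) = b + kb k"
  by (cases b) (auto simp: kb_def tog_def)

lemma tog0: "tog 0 k = k" by (simp add: tog_def)

lemma tog_bij: "bij_betw (tog b) {0, 1} {0, 1}"
  by (cases b) (auto simp: bij_betw_def inj_on_def tog_def)

lemma bit_xx: "(x :: bit) + x = 0" by (cases x) simp_all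

lemma sv_at0: "sv b 0 = b" by (simp add: sv_def)

lemma shift_edge:
  "\<exists>s t. \<forall>k1\<in>{0, 1}. \<forall>k2\<in>{0, 1}.
     edge_msg c0 (a1, a2, k1, k2) e = edge_msg c0 (sv 0, sv 0, tog s k1, tog t k2) e"
proof (cases e)
  case E1 then show ?thesis by (intro exI[of _ 0]) (simp add: c0_def tog0)
next
  case E2 then show ?thesis
    by (intro exI[of _ "a1 0"] exI[of _ 0]) (simp add: c0_def tog0 kb_tog sv_at0)
next
  case E3 then show ?thesis by (intro exI[of _ 0]) (simp add: c0_def tog0)
next
  case E4 then show ?thesis
    by (intro exI[of _ 0] exI[of _ "a2 0"]) (simp add: c0_def tog0 kb_tog sv_at0)
next
  case E5
  have h: "sv (kb k1 + (a1 0 + kb k1) + kb k2) = sv (kb k1 + (0 + kb k1) + (a1 0 + kb k2))" for k1 k2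
    by (cases "a1 0"; cases "kb k1"; cases "kb k2") simp_all
  show ?thesis
    apply (rule exI[of _ 0], rule exI[of _ "a1 0"], intro ballI)
    apply (simp only: E5 edge_msg.simps c0_def code.simps tog0 kb_tog sv_at0)
    apply (rule h)
    done
qed

lemma shiftW:
  assumes "card W \<le> 1"
  shows "\<exists>s t. \<forall>k1\<in>{0, 1}. \<forall>k2\<in>{0, 1}.
     Y_W c0 W (a1, a2, k1, k2) = Y_W c0 W (sv 0, sv 0, tog s k1, tog t k2)"
proof -
  have "W = {} \<or> (\<exists>e. W = {e})"
  proof (cases "card W = 0")
    case True then show ?thesis using finite_edge_set[of W] by simp
  next
    case False then have "card W = 1" using assms by simp
    then show ?thesis by (auto simp: card_1_singleton_iff)
  qed
  then show ?thesis
  proof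
    assume "W = {}" then show ?thesis by (simp add: Y_W_def)
  next
    assume "\<exists>e. W = {e}"
    then obtain e where W: "W = {e}" by blast
    obtain s t where st: "\<forall>k1\<in>{0, 1}. \<forall>k2\<in>{0, 1}.
       edge_msg c0 (a1, a2, k1, k2) e = edge_msg c0 (sv 0, sv 0, tog s k1, tog t k2) e"
      using shift_edge by blast
    show ?thesis
      by (rule exI[of _ s], rule exI[of _ t]) (use st in \<open>auto simp: W Y_W_def fun_eq_iff\<close>)
  qed
qed

lemma omega_c0: "omega c0 = vecs 1 \<times> vecs 1 \<times> {0, 1} \<times> {0, 1}"
  by (simp add: omega_def c0_def)

lemma leak: "card W \<le> 1 \<Longrightarrow> zero_leakage c0 W"
proof -
  assume W: "card W \<le> 1"
  let ?\<Omega> = "vecs 1 \<times> vecs 1 \<times> {0::nat, 1} \<times> {0::nat, 1}"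
  have key: "real (card {\<omega> \<in> ?\<Omega>. Y_W c0 W \<omega> = y \<and> (fst \<omega>, fst (snd \<omega>)) = m})
           * real (card ?\<Omega>)
         = real (card {\<omega> \<in> ?\<Omega>. Y_W c0 W \<omega> = y})
           * real (card {\<omega> \<in> ?\<Omega>. (fst \<omega>, fst (snd \<omega>)) = m})" for y m
  proof (rule indep_count[where p = "sv 0" and q = "sv 0"])
    fix a1 a2
    obtain s t where st: "\<forall>k1\<in>{0, 1}. \<forall>k2\<in>{0, 1}.
       Y_W c0 W (a1, a2, k1, k2) = Y_W c0 W (sv 0, sv 0, tog s k1, tog t k2)"
      using shiftW[OF W] by blast
    show "\<exists>\<phi>. bij_betw \<phi> ({0, 1} \<times> {0, 1}) ({0, 1} \<times> {0, 1}) \<and>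
          (\<forall>k\<in>{0::nat, 1} \<times> {0::nat, 1}. Y_W c0 W (a1, a2, fst k, snd k) =
             Y_W c0 W (sv 0, sv 0, fst (\<phi> k), snd (\<phi> k)))"
      apply (rule exI[of _ "map_prod (tog s) (tog t)"])
      apply (intro conjI bij_betw_map_prod tog_bij)
      using st by auto
  qed (use finite_vecs1 sv_vecs in auto)
  have c: "card (vecs 1) > 0" using finite_vecs1 sv_vecs[of 0] card_gt_0_iff by blast
  have pos: "real (card ?\<Omega>) > 0"
    using c by (simp add: card_cartesian_product)
  show ?thesis
    unfolding zero_leakage_def prob_c_def omega_c0 M_S_def
  proof (intro allI)
    fix y m
    show "real (card {\<omega> \<in> ?\<Omega>. Y_W c0 W \<omega> = y \<and> (fst \<omega>, fst (snd \<omega>)) = m}) / real (card ?\<Omega>)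
      = real (card {\<omega> \<in> ?\<Omega>. Y_W c0 W \<omega> = y}) / real (card ?\<Omega>)
      * (real (card {\<omega> \<in> ?\<Omega>. (fst \<omega>, fst (snd \<omega>)) = m}) / real (card ?\<Omega>))"
      using key[of y m] pos by (simp add: field_simps)
  qed
qed


lemma wf_c0: "well_formed_code c0"
  unfolding well_formed_code_def c0_def code.simps
  by (intro conjI ballI) (simp_all only: sv_vecs finite.emptyI finite.insertI insert_not_empty order_refl, simp_all)

lemma bit4: "(b :: bit) + d + (c + (a + c) + d) = a + b"
  by (cases a; cases b; cases c; cases d) simp_all

lemma sv_add: "sv (b1 + b2) = (\<lambda>i. sv b1 i + sv b2 i)"
  by (rule ext) (simp add: sv_def)

lemma dec_c0:
  assumes w: "\<omega> \<in> omega c0"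
  shows "dec c0 (edge_msg c0 \<omega> E4) (edge_msg c0 \<omega> E5) = (\<lambda>i. fst \<omega> i + fst (snd \<omega>) i)"
proof -
  obtain m1 m2 k1 k2 where o: "\<omega> = (m1, m2, k1, k2)" by (cases \<omega>) auto
  have "m1 \<in> vecs 1" and "m2 \<in> vecs 1" using w o by (auto simp: omega_c0)
  then obtain b1 b2 where b: "m1 = sv b1" "m2 = sv b2" unfolding vecs1 by blast
  have h: "sv (b2 + kb k2 + (kb k1 + (b1 + kb k1) + kb k2)) = sv (b1 + b2)"
    by (simp only: bit4)
  have "dec c0 (edge_msg c0 \<omega> E4) (edge_msg c0 \<omega> E5) = sv (b2 + kb k2 + (kb k1 + (b1 + kb k1) + kb k2))"
    unfolding o b by (simp only: edge_msg.simps c0_def code.simps sv_at0)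
  also have "\<dots> = sv (b1 + b2)" by (rule h)
  also have "\<dots> = (\<lambda>i. fst \<omega> i + fst (snd \<omega>) i)"
    unfolding o b fst_conv snd_conv by (rule sv_add)
  finally show ?thesis .
qed

lemma admissible_c0: "admissible 1 c0"
proof -
  have "\<forall>W :: edge set. card W \<le> 1 \<longrightarrow> zero_leakage c0 W" by (intro allI impI leak)
  then show ?thesis unfolding admissible_def using wf_c0 dec_c0 by blast
qed

lemma finite_vecs: "finite (vecs n)"
proof -
  have "vecs n = {f. \<forall>x. (x \<in> {..<n} \<longrightarrow> f x \<in> UNIV) \<and> (x \<notin> {..<n} \<longrightarrow> f x = 0)}"
    by (auto simp: vecs_def)
  also have "finite \<dots>"
    by (rule finite_set_of_finite_funs) (simp_all add: UNIV_bit)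
  finally show ?thesis .
qed

lemma converse:
  assumes "admissible 1 c"
  shows "len_l c \<le> len_n c"
proof (rule ccontr)
  assume "\<not> len_l c \<le> len_n c"
  then have lt: "len_n c < len_l c" by simp
  have wf: "well_formed_code c"
    and cor: "\<forall>\<omega> \<in> omega c. dec c (edge_msg c \<omega> E4) (edge_msg c \<omega> E5) = (\<lambda>i. fst \<omega> i + fst (snd \<omega>) i)"
    using assms unfolding admissible_def by blast+
  have ne1: "keys1 c \<noteq> {}" and ne2: "keys2 c \<noteq> {}"
    and h12: "\<forall>m \<in> vecs (len_l c). \<forall>k \<in> keys1 c.
        enc1 c m k \<in> vecs (len_n c) \<and> enc2 c m k \<in> vecs (len_n c)"
    and h34: "\<forall>m \<in> vecs (len_l c). \<forall>k \<in> keys2 c.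
        enc3 c m k \<in> vecs (len_n c) \<and> enc4 c m k \<in> vecs (len_n c)"
    and h5: "\<forall>y1 \<in> vecs (len_n c). \<forall>y2 \<in> vecs (len_n c). \<forall>y3 \<in> vecs (len_n c).
        enc5 c y1 y2 y3 \<in> vecs (len_n c)"
    using wf unfolding well_formed_code_def by blast+
  obtain k1 where k1: "k1 \<in> keys1 c" using ne1 by (meson ex_in_conv)
  obtain k2 where k2: "k2 \<in> keys2 c" using ne2 by (meson ex_in_conv)
  define z where "z = (\<lambda>_::nat. 0::bit)"
  have z: "z \<in> vecs (len_l c)" by (simp add: z_def vecs_def)
  define g where "g m = edge_msg c (m, z, k1, k2) E5" for m
  have inj: "inj_on g (vecs (len_l c))"
  proof (rule inj_onI)
    fix x y assume x: "x \<in> vecs (len_l c)" and y: "y \<in> vecs (len_l c)" and e: "g x = g y"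
    have mx: "(x, z, k1, k2) \<in> omega c" and my: "(y, z, k1, k2) \<in> omega c"
      using x y z k1 k2 unfolding omega_def by blast+
    have zz: "(\<lambda>i. w i + z i) = w" for w by (simp only: z_def add_0_right)
    have "dec c (edge_msg c (x, z, k1, k2) E4) (g x) = x"
      using bspec[OF cor mx] unfolding g_def fst_conv snd_conv zz .
    moreover have "dec c (edge_msg c (y, z, k1, k2) E4) (g y) = y"
      using bspec[OF cor my] unfolding g_def fst_conv snd_conv zz .
    moreover have "edge_msg c (x, z, k1, k2) E4 = edge_msg c (y, z, k1, k2) E4"
      by (simp only: edge_msg.simps)
    ultimately show "x = y" using e by metis
  qed
  have sub: "g ` vecs (len_l c) \<subseteq> vecs (len_n c)"
  proof
    fix w assume "w \<in> g ` vecs (len_l c)"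
    then obtain m where m: "m \<in> vecs (len_l c)" "w = g m" by blast
    have a1: "enc1 c m k1 \<in> vecs (len_n c)" and a2: "enc2 c m k1 \<in> vecs (len_n c)"
      using h12 m(1) k1 by blast+
    have a3: "enc3 c z k2 \<in> vecs (len_n c)"
      using h34 z k2 by blast
    have "g m = enc5 c (enc1 c m k1) (enc2 c m k1) (enc3 c z k2)"
      unfolding g_def by (simp only: edge_msg.simps)
    then show "w \<in> vecs (len_n c)"
      using h5 a1 a2 a3 m(2) by metis
  qed
  have le: "card (vecs (len_l c)) \<le> card (vecs (len_n c))"
    using card_inj_on_le[OF inj sub finite_vecs] .
  define u where "u = (\<lambda>i. if i = len_n c then 1 else 0 :: bit)"
  have ps: "vecs (len_n c) \<subset> vecs (len_l c)"
  proof
    show "vecs (len_n c) \<subseteq> vecs (len_l c)" using lt by (auto simp: vecs_def)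
    have "u \<in> vecs (len_l c)" using lt by (auto simp: vecs_def u_def)
    moreover have "u \<notin> vecs (len_n c)" by (auto simp: vecs_def u_def)
    ultimately show "vecs (len_n c) \<noteq> vecs (len_l c)" by blast
  qed
  have "card (vecs (len_n c)) < card (vecs (len_l c))"
    by (rule psubset_card_mono[OF finite_vecs ps])
  with le show False by simp
qed

lemma rate_le: "admissible 1 c \<Longrightarrow> rate c \<le> 1"
proof -
  assume a: "admissible 1 c"
  have "len_n c \<ge> 1" using a unfolding admissible_def well_formed_code_def by simp
  with converse[OF a] show ?thesis unfolding rate_def by (simp add: divide_le_eq_1)
qed

lemma step_iff: "(u, w) \<in> step_without C \<longleftrightarrow> (\<exists>e. e \<notin> C \<and> u = tl_e e \<and> w = hd_e e)"
  by (auto simp: step_without_def)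

lemma card0_empty: "card (C :: edge set) = 0 \<Longrightarrow> C = {}"
  using finite_edge_set[of C] by simp

lemma no_path: "(Sigma1, Rho) \<notin> (step_without {E5})\<^sup>*"
proof
  assume "(Sigma1, Rho) \<in> (step_without {E5})\<^sup>*"
  moreover have "(Sigma1, y) \<in> (step_without {E5})\<^sup>* \<Longrightarrow> y \<in> {Sigma1, V}" for y
  proof (induction rule: rtrancl_induct)
    case base then show ?case by simp
  next
    case (step y z)
    then obtain e where "e \<noteq> E5" "y = tl_e e" "z = hd_e e" by (auto simp: step_iff)
    with step.IH show ?case by (cases e) auto
  qed
  ultimately show False by blast
qed

lemma path0_1: "(Sigma1, Rho) \<in> (step_without {})\<^sup>*"
proof -
  have "(Sigma1, V) \<in> step_without {}" unfolding step_iff by (rule exI[of _ E1]) simp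
  moreover have "(V, Rho) \<in> step_without {}" unfolding step_iff by (rule exI[of _ E5]) simp
  ultimately show ?thesis by (meson rtrancl.rtrancl_into_rtrancl r_into_rtrancl)
qed

lemma path0_2: "(Sigma2, Rho) \<in> (step_without {})\<^sup>*"
proof -
  have "(Sigma2, Rho) \<in> step_without {}" unfolding step_iff by (rule exI[of _ E4]) simp
  then show ?thesis by blast
qed

lemma mincut1: "mincut Sigma1 Rho = 1"
  unfolding mincut_def
proof (rule Least_equality)
  show "\<exists>C. card C = 1 \<and> (Sigma1, Rho) \<notin> (step_without C)\<^sup>*"
    using no_path by (intro exI[of _ "{E5}"]) simp
next
  fix k assume "\<exists>C. card C = k \<and> (Sigma1, Rho) \<notin> (step_without C)\<^sup>*"
  then obtain C where "card C = k" "(Sigma1, Rho) \<notin> (step_without C)\<^sup>*" by blast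
  then show "1 \<le> k" using path0_1 card0_empty by (cases k) auto
qed

lemma mincut2: "mincut Sigma2 Rho \<ge> 1"
proof -
  let ?P = "\<lambda>k. \<exists>C. card C = k \<and> (Sigma2, Rho) \<notin> (step_without C)\<^sup>*"
  have "step_without UNIV = {}" by (simp add: step_without_def)
  then have "?P (card (UNIV :: edge set))" by auto
  then have "?P (Least ?P)" by (rule LeastI)
  then obtain C where C: "card C = Least ?P" "(Sigma2, Rho) \<notin> (step_without C)\<^sup>*" by blast
  have "Least ?P \<noteq> 0"
  proof
    assume "Least ?P = 0"
    then have "C = {}" using C(1) card0_empty by simp
    then show False using C(2) path0_2 by simp
  qed
  then show ?thesis unfolding mincut_def by simp
qed

theorem mainTheorem5:
  shows "secure_capacity 1 = 1
       \<and> (\<forall>R. achievable 1 R \<longrightarrow> R \<le> 1) \<and> achievable 1 1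
       \<and> secure_capacity 1 = real (min (mincut Sigma1 Rho) (mincut Sigma2 Rho))
       \<and> (\<exists>c. admissible 1 c \<and> len_l c = 1 \<and> len_n c = 1)"
proof -
  have r0: "rate c0 = 1" by (simp add: rate_def c0_def)
  have ach: "achievable 1 1"
    unfolding achievable_def using admissible_c0 r0 by auto
  have up: "\<forall>R. achievable 1 R \<longrightarrow> R \<le> 1"
  proof (intro allI impI)
    fix R assume a: "achievable 1 R"
    show "R \<le> 1"
    proof (rule ccontr)
      assume "\<not> R \<le> 1"
      then have "R - 1 > 0" by simp
      with a obtain c where "admissible 1 c" "rate c > R - (R - 1)" unfolding achievable_def by blast
      with rate_le show False by fastforce
    qed
  qed
  have cap: "secure_capacity 1 = 1"
    unfolding secure_capacity_def
    by (rule cSup_eq_maximum) (use ach up in auto)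
  have mc: "min (mincut Sigma1 Rho) (mincut Sigma2 Rho) = 1"
    using mincut1 mincut2 by simp
  have ex: "\<exists>c. admissible 1 c \<and> len_l c = 1 \<and> len_n c = 1"
    using admissible_c0 by (intro exI[of _ c0]) (simp add: c0_def)
  show ?thesis using cap up ach mc ex by simp
qed
end
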